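(* Let $\{Y_i\}_{i\in\mathbb{N}}$ be i.i.d. symmetric $\alpha$-stable random variables with $\alpha\in(0,2]$, fix $\beta\in(0,1)$, and for $n\ge1$ let $X^{(n)}(t)=\sum_{i=1}^{\lfloor n^\beta t\rfloor} Y_i/n^{\beta/\alpha}$, $t\ge0$, defined on $(\Omega^n,\mathcal{F}^n,\mathbb{P}^n)$ with its natural filtration $\mathcal{F}^n_t$. Fix $\delta>0$ and set $X^{(n),\delta}=X^{(n)}-K_\delta(X^{(n)})$. Then $X^{(n),\delta}$ admits a decomposition $X^{(n),\delta}=M^{n,\delta}+A^{n,\delta}$ into an $\mathcal{F}^n_t$-local martingale $M^{n,\delta}$ and a process $A^{n,\delta}$ of finite variation such that for each $t$ and each $\theta>0$ there exist stopping times $\tau_n^\theta$ with $\mathbb{P}(\tau_n^\theta\le\theta)\le 1/\theta$ and $$\sup_n\mathbb{E}\Big[[M^{n,\delta},M^{n,\delta}]_{t\wedge\tau_n^\theta}+TV(A^{n,\delta},t\wedge\tau_n^\theta)\Big]<\infty.$$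
   Context: $h_\delta(r)=(1-\delta/r)^+$ for $r>0$, and for càdlàg $x$, $K_\delta(x)(t)=\sum_{0<s\le t}h_\delta(|\Delta x(s)|)\Delta x(s)$ with $\Delta x(s)=x(s)-x(s-)$; thus $X^{(n),\delta}$ has all jumps bounded by $\delta$. $[M,M]$ denotes quadratic variation and $TV(A,t)=\sup\sum_i|A(t_i)-A(t_{i-1})|$ over partitions $0\le t_0<\dots<t_m\le t$ is the total variation of $A$ on $[0,t]$. *)

theory Defs
  imports "HOL-Probability.Probability"
begin

(* h_delta(r) = (1 - delta/r)^+ for r > 0 (value at r = 0 irrelevant, set to 0) *)
definition hdelta :: "real \<Rightarrow> real \<Rightarrow> real" where
  "hdelta \<delta> r = (if 0 < r then max 0 (1 - \<delta> / r) else 0)"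

definition left_lim :: "(real \<Rightarrow> real) \<Rightarrow> real \<Rightarrow> real" where
  "left_lim x s = Lim (at_left s) x"

definition jump :: "(real \<Rightarrow> real) \<Rightarrow> real \<Rightarrow> real" where
  "jump x s = x s - left_lim x s"

definition Kdelta :: "real \<Rightarrow> (real \<Rightarrow> real) \<Rightarrow> real \<Rightarrow> real" where
  "Kdelta \<delta> x t = (\<Sum>\<^sub>\<infinity>s\<in>{0<..t}. hdelta \<delta> \<bar>jump x s\<bar> * jump x s)"

definition cadlag :: "(real \<Rightarrow> real) \<Rightarrow> bool" where
  "cadlag x \<longleftrightarrow> (\<forall>t. continuous (at_right t) x \<and> (\<exists>l. (x \<longlongrightarrow> l) (at_left t)))"

definition sym_stable :: "real \<Rightarrow> real measure \<Rightarrow> bool" where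
  "sym_stable \<alpha> \<mu> \<longleftrightarrow> (\<exists>c>0. \<forall>u. char \<mu> u = complex_of_real (exp (- c * \<bar>u\<bar> powr \<alpha>)))"

definition nat_filtration :: "'a measure \<Rightarrow> (real \<Rightarrow> 'a \<Rightarrow> real) \<Rightarrow> real \<Rightarrow> 'a measure" where
  "nat_filtration M X s =
     sigma (space M) {X r -` B \<inter> space M | r B. 0 \<le> r \<and> r \<le> s \<and> B \<in> sets borel}"

definition adapted :: "(real \<Rightarrow> 'a measure) \<Rightarrow> (real \<Rightarrow> 'a \<Rightarrow> real) \<Rightarrow> bool" where
  "adapted F X \<longleftrightarrow> (\<forall>t\<ge>0. X t \<in> borel_measurable (F t))"

definition martingale :: "'a measure \<Rightarrow> (real \<Rightarrow> 'a measure) \<Rightarrow> (real \<Rightarrow> 'a \<Rightarrow> real) \<Rightarrow> bool" where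
  "martingale M F X \<longleftrightarrow> adapted F X \<and> (\<forall>t\<ge>0. integrable M (X t)) \<and>
     (\<forall>s t. 0 \<le> s \<and> s \<le> t \<longrightarrow> (AE \<omega> in M. real_cond_exp M (F s) (X t) \<omega> = X s \<omega>))"

definition local_martingale :: "'a measure \<Rightarrow> (real \<Rightarrow> 'a measure) \<Rightarrow> (real \<Rightarrow> 'a \<Rightarrow> real) \<Rightarrow> bool" where
  "local_martingale M F X \<longleftrightarrow> adapted F X \<and> (\<forall>\<omega>\<in>space M. cadlag (\<lambda>t. X t \<omega>)) \<and>
     (\<exists>\<tau> :: nat \<Rightarrow> 'a \<Rightarrow> real.
        (\<forall>k. stopping_time F (\<tau> k) \<and> (\<forall>\<omega>\<in>space M. 0 \<le> \<tau> k \<omega>)) \<and>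
        (AE \<omega> in M. mono (\<lambda>k. \<tau> k \<omega>) \<and> filterlim (\<lambda>k. \<tau> k \<omega>) at_top sequentially) \<and>
        (\<forall>k. martingale M F (\<lambda>t \<omega>. X (min t (\<tau> k \<omega>)) \<omega>)))"

definition total_variation :: "(real \<Rightarrow> real) \<Rightarrow> real \<Rightarrow> ennreal" where
  "total_variation f t =
     (SUP p \<in> {p. sorted_wrt (<) p \<and> (\<forall>x\<in>set p. 0 \<le> x \<and> x \<le> t)}.
        \<Sum>i<length p - 1. ennreal \<bar>f (p ! Suc i) - f (p ! i)\<bar>)"

definition finite_variation_process :: "'a measure \<Rightarrow> (real \<Rightarrow> 'a measure) \<Rightarrow> (real \<Rightarrow> 'a \<Rightarrow> real) \<Rightarrow> bool" where
  "finite_variation_process M F A \<longleftrightarrow> adapted F A \<and> (\<forall>\<omega>\<in>space M. cadlag (\<lambda>t. A t \<omega>)) \<and>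
     (AE \<omega> in M. \<forall>t\<ge>0. total_variation (\<lambda>s. A s \<omega>) t < \<infinity>)"

definition is_partition :: "real \<Rightarrow> real list \<Rightarrow> bool" where
  "is_partition t p \<longleftrightarrow> p \<noteq> [] \<and> sorted_wrt (<) p \<and> hd p = 0 \<and> last p = t"

definition mesh :: "real list \<Rightarrow> real" where
  "mesh p = foldr max (map (\<lambda>i. p ! Suc i - p ! i) [0..<length p - 1]) 0"

definition qv_sum :: "(real \<Rightarrow> real) \<Rightarrow> real list \<Rightarrow> real" where
  "qv_sum x p = (\<Sum>i<length p - 1. (x (p ! Suc i) - x (p ! i))\<^sup>2)"

definition quadratic_variation :: "'a measure \<Rightarrow> (real \<Rightarrow> 'a \<Rightarrow> real) \<Rightarrow> (real \<Rightarrow> 'a \<Rightarrow> real) \<Rightarrow> bool" where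
  "quadratic_variation M X Q \<longleftrightarrow>
     (\<forall>\<omega>\<in>space M. \<forall>t. continuous (at_right t) (\<lambda>s. Q s \<omega>)) \<and>
     (\<forall>t\<ge>0. Q t \<in> borel_measurable M) \<and>
     (\<forall>t\<ge>0. \<forall>P :: nat \<Rightarrow> real list.
        (\<forall>k. is_partition t (P k)) \<and> (\<lambda>k. mesh (P k)) \<longlonglongrightarrow> 0 \<longrightarrow>
        (\<forall>\<epsilon>>0. (\<lambda>k. measure M {\<omega> \<in> space M. \<epsilon> < \<bar>qv_sum (\<lambda>s. X s \<omega>) (P k) - Q t \<omega>\<bar>})
                   \<longlonglongrightarrow> 0))"

definition Xn :: "real \<Rightarrow> real \<Rightarrow> (nat \<Rightarrow> 'a \<Rightarrow> real) \<Rightarrow> nat \<Rightarrow> real \<Rightarrow> 'a \<Rightarrow> real" where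
  "Xn \<alpha> \<beta> Y n t \<omega> =
     (\<Sum>i\<in>{1..nat \<lfloor>real n powr \<beta> * t\<rfloor>}. Y i \<omega>) / real n powr (\<beta> / \<alpha>)"

definition Xn_delta :: "real \<Rightarrow> real \<Rightarrow> real \<Rightarrow> (nat \<Rightarrow> 'a \<Rightarrow> real) \<Rightarrow> nat \<Rightarrow> real \<Rightarrow> 'a \<Rightarrow> real" where
  "Xn_delta \<alpha> \<beta> \<delta> Y n t \<omega> =
     Xn \<alpha> \<beta> Y n t \<omega> - Kdelta \<delta> (\<lambda>s. Xn \<alpha> \<beta> Y n s \<omega>) t"

end

theory Submission
  imports Defs
begin


lemma floor_right_ev:
  fixes a z :: real assumes a: "a > 0"
  shows "eventually (\<lambda>x. \<lfloor>a*x\<rfloor> = \<lfloor>a*z\<rfloor>) (at_right z)"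
proof -
  have "\<exists>b>z. \<forall>y>z. y < b \<longrightarrow> \<lfloor>a*y\<rfloor> = \<lfloor>a*z\<rfloor>"
  proof (intro exI conjI allI impI)
    have "a*z < \<lfloor>a*z\<rfloor>+1" by linarith
    then show "z < (\<lfloor>a*z\<rfloor>+1)/a" using a by (simp add: pos_less_divide_eq mult.commute)
    fix y assume y: "z < y" "y < (\<lfloor>a*z\<rfloor>+1)/a"
    have "a*z < a*y" using y a by simp
    moreover have "a*y < \<lfloor>a*z\<rfloor>+1" using y a by (simp add: pos_less_divide_eq mult.commute)
    moreover have "\<lfloor>a*z\<rfloor> \<le> a*z" by linarith
    ultimately have "of_int \<lfloor>a*z\<rfloor> \<le> a*y \<and> a*y < of_int \<lfloor>a*z\<rfloor> + 1" by linarith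
    then show "\<lfloor>a*y\<rfloor> = \<lfloor>a*z\<rfloor>" by (simp add: floor_eq_iff)
  qed
  then show ?thesis by (simp add: eventually_at_right_field)
qed

lemma floor_left_ev:
  fixes a z :: real assumes a: "a > 0"
  shows "eventually (\<lambda>x. \<lfloor>a*x\<rfloor> = \<lceil>a*z\<rceil> - 1) (at_left z)"
proof -
  have "\<exists>b<z. \<forall>y>b. y < z \<longrightarrow> \<lfloor>a*y\<rfloor> = \<lceil>a*z\<rceil> - 1"
  proof (intro exI conjI allI impI)
    have "\<lceil>a*z\<rceil>-1 < a*z" by linarith
    then show "(\<lceil>a*z\<rceil>-1)/a < z" using a by (simp add: pos_divide_less_eq mult.commute)
    fix y assume y: "(\<lceil>a*z\<rceil>-1)/a < y" "y < z"
    have "\<lceil>a*z\<rceil>-1 < a*y" using y a by (simp add: pos_divide_less_eq mult.commute)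
    moreover have "a*y < a*z" using y a by simp
    moreover have "a*z \<le> \<lceil>a*z\<rceil>" by linarith
    ultimately have "of_int (\<lceil>a*z\<rceil> - 1) \<le> a*y \<and> a*y < of_int (\<lceil>a*z\<rceil> - 1) + 1" by linarith
    then show "\<lfloor>a*y\<rfloor> = \<lceil>a*z\<rceil> - 1" by (simp only: floor_eq_iff)
  qed
  then show ?thesis by (simp add: eventually_at_left_field)
qed

lemma step_right:
  fixes a :: real assumes "a > 0"
  shows "continuous (at_right t) (\<lambda>z. G (nat \<lfloor>a*z\<rfloor>))"
proof -
  have "eventually (\<lambda>x. G (nat \<lfloor>a*x\<rfloor>) = G (nat \<lfloor>a*t\<rfloor>)) (at_right t)"
    using floor_right_ev[OF assms, of t] by eventually_elim simp
  then show ?thesis unfolding continuous_within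
    by (simp add: tendsto_eventually)
qed

lemma step_left:
  fixes a :: real assumes "a > 0"
  shows "((\<lambda>z. G (nat \<lfloor>a*z\<rfloor>)) \<longlongrightarrow> G (nat (\<lceil>a*t\<rceil>-1))) (at_left t)"
proof -
  have "eventually (\<lambda>x. G (nat \<lfloor>a*x\<rfloor>) = G (nat (\<lceil>a*t\<rceil>-1))) (at_left t)"
    using floor_left_ev[OF assms, of t] by eventually_elim simp
  then show ?thesis by (simp add: tendsto_eventually)
qed

lemma step_cadlag:
  fixes a :: real assumes "a > 0"
  shows "cadlag (\<lambda>z. G (nat \<lfloor>a*z\<rfloor>))"
  unfolding cadlag_def using step_right[OF assms] step_left[OF assms] by blast

lemma step_left_lim:
  fixes a :: real assumes "a > 0"
  shows "left_lim (\<lambda>z. G (nat \<lfloor>a*z\<rfloor>)) t = G (nat (\<lceil>a*t\<rceil>-1))"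
  unfolding left_lim_def by (rule tendsto_Lim[OF trivial_limit_at_left_real step_left[OF assms]])


lemma jump_step:
  fixes a :: real assumes a: "a > 0"
  shows "jump (\<lambda>z. G (nat \<lfloor>a * z\<rfloor>)) s =
    (if a * s = of_int \<lfloor>a * s\<rfloor> then G (nat \<lfloor>a * s\<rfloor>) - G (nat (\<lfloor>a * s\<rfloor>-1)) else 0)"
proof -
  have "jump (\<lambda>z. G (nat \<lfloor>a * z\<rfloor>)) s = G (nat \<lfloor>a * s\<rfloor>) - G (nat (\<lceil>a * s\<rceil>-1))"
    unfolding jump_def using step_left_lim[OF a] by simp
  moreover have "\<lceil>a * s\<rceil> = (if a * s = of_int \<lfloor>a * s\<rfloor> then \<lfloor>a * s\<rfloor> else \<lfloor>a * s\<rfloor> + 1)"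
    by (rule ceiling_altdef)
  ultimately show ?thesis by auto
qed

definition phi :: "real \<Rightarrow> real \<Rightarrow> real" where
  "phi \<delta> x = hdelta \<delta> \<bar>x\<bar> * x"

lemma Kdelta_step:
  fixes a :: real assumes a: "a > 0"
  shows "Kdelta \<delta> (\<lambda>z. G (nat \<lfloor>a * z\<rfloor>)) t =
    (\<Sum>k\<in>{1..nat \<lfloor>a * t\<rfloor>}. phi \<delta> (G k - G (k-1)))"
proof -
  let ?x = "\<lambda>z. G (nat \<lfloor>a * z\<rfloor>)"
  let ?f = "\<lambda>s. hdelta \<delta> \<bar>jump ?x s\<bar> * jump ?x s"
  define T where "T = (\<lambda>k. real k / a) ` {1..nat \<lfloor>a * t\<rfloor>}"
  have aT: "\<And>k::nat. a * (real k / a) = real k" using a by simp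
  have "Kdelta \<delta> ?x t = infsum ?f T"
    unfolding Kdelta_def
  proof (rule infsum_cong_neutral)
    fix s assume "s \<in> T - {0<..t}"
    then obtain k where k: "k \<in> {1..nat \<lfloor>a * t\<rfloor>}" "s = real k / a" "s \<notin> {0<..t}"
      unfolding T_def by auto
    have "real k \<le> a * t" using k(1) by (simp add: le_nat_floor) linarith
    then have "s \<le> t" using a k(2) by (simp add: divide_le_eq mult.commute)
    moreover have "0 < s" using k a by auto
    ultimately show "?f s = 0" using k by auto
  next
    fix s assume s: "s \<in> {0<..t} - T"
    have "\<not> (a * s = of_int \<lfloor>a * s\<rfloor>)"
    proof
      assume eq: "a * s = of_int \<lfloor>a * s\<rfloor>"
      have "0 < a * s" using s a by auto
      then have pos: "1 \<le> \<lfloor>a * s\<rfloor>" using eq by linarith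
      have "a * s \<le> a * t" using s a by auto
      then have "\<lfloor>a * s\<rfloor> \<le> \<lfloor>a * t\<rfloor>" by (rule floor_mono)
      then have "nat \<lfloor>a * s\<rfloor> \<in> {1..nat \<lfloor>a * t\<rfloor>}" using nat_mono[OF pos] nat_mono by auto
      moreover have "s = real (nat \<lfloor>a * s\<rfloor>) / a" using eq pos a by (simp add: field_simps)
      ultimately have "s \<in> T" unfolding T_def by blast
      then show False using s by auto
    qed
    then show "?f s = 0" using jump_step[OF a] by simp
  qed simp
  also have "\<dots> = sum ?f T" unfolding T_def by simp
  also have "\<dots> = (\<Sum>k\<in>{1..nat \<lfloor>a * t\<rfloor>}. ?f (real k / a))"
    unfolding T_def using a by (subst sum.reindex) (auto simp: inj_on_def)
  also have "\<dots> = (\<Sum>k\<in>{1..nat \<lfloor>a * t\<rfloor>}. phi \<delta> (G k - G (k-1)))"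
  proof (rule sum.cong)
    fix k assume "k \<in> {1..nat \<lfloor>a * t\<rfloor>}"
    then have "jump ?x (real k / a) = G k - G (k-1)"
      using jump_step[OF a, of G "real k / a"] aT[of k] by (simp add: nat_diff_distrib)
    then show "?f (real k / a) = phi \<delta> (G k - G (k-1))" by (simp add: phi_def)
  qed simp
  finally show ?thesis .
qed

definition gfun :: "real \<Rightarrow> real \<Rightarrow> real" where
  "gfun \<delta> x = x - phi \<delta> x"

definition Sp :: "(nat \<Rightarrow> 'a \<Rightarrow> real) \<Rightarrow> real \<Rightarrow> real \<Rightarrow> real \<Rightarrow> real \<Rightarrow> 'a \<Rightarrow> real" where
  "Sp Y a c \<delta> t \<omega> = (\<Sum>i\<in>{1..nat \<lfloor>a * t\<rfloor>}. gfun \<delta> (Y i \<omega> / c))"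

definition Qp :: "(nat \<Rightarrow> 'a \<Rightarrow> real) \<Rightarrow> real \<Rightarrow> real \<Rightarrow> real \<Rightarrow> real \<Rightarrow> 'a \<Rightarrow> real" where
  "Qp Y a c \<delta> t \<omega> = (\<Sum>i\<in>{1..nat \<lfloor>a * t\<rfloor>}. (gfun \<delta> (Y i \<omega> / c))\<^sup>2)"

lemma Xn_step: "Xn \<alpha> \<beta> Y n t \<omega> = (\<lambda>k. (\<Sum>i\<in>{1..k}. Y i \<omega>) / real n powr (\<beta>/\<alpha>)) (nat \<lfloor>real n powr \<beta> * t\<rfloor>)"
  unfolding Xn_def by simp

lemma Xn_delta_eq:
  assumes "n \<ge> 1"
  shows "Xn_delta \<alpha> \<beta> \<delta> Y n t \<omega> = Sp Y (real n powr \<beta>) (real n powr (\<beta>/\<alpha>)) \<delta> t \<omega>"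
proof -
  define a where "a = real n powr \<beta>"
  define c where "c = real n powr (\<beta>/\<alpha>)"
  define G where "G k = (\<Sum>i\<in>{1..k}. Y i \<omega>) / c" for k
  have a: "a > 0" using assms unfolding a_def by simp
  have X: "(\<lambda>s. Xn \<alpha> \<beta> Y n s \<omega>) = (\<lambda>z. G (nat \<lfloor>a * z\<rfloor>))"
    unfolding Xn_def G_def a_def c_def by simp
  have G: "G k - G (k-1) = Y k \<omega> / c" if "k \<ge> 1" for k
  proof -
    have "{1..k} = insert k {1..k-1}" using that by auto
    then have "(\<Sum>i\<in>{1..k}. Y i \<omega>) = Y k \<omega> + (\<Sum>i\<in>{1..k-1}. Y i \<omega>)" using that by simp
    then show ?thesis unfolding G_def by (simp add: diff_divide_distrib add_divide_distrib)
  qed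
  have "Xn_delta \<alpha> \<beta> \<delta> Y n t \<omega> = G (nat \<lfloor>a * t\<rfloor>) - (\<Sum>k\<in>{1..nat \<lfloor>a * t\<rfloor>}. phi \<delta> (G k - G (k-1)))"
    unfolding Xn_delta_def X Kdelta_step[OF a] by (simp add: X[symmetric] Xn_def G_def a_def c_def)
  also have "\<dots> = (\<Sum>k\<in>{1..nat \<lfloor>a * t\<rfloor>}. Y k \<omega> / c) - (\<Sum>k\<in>{1..nat \<lfloor>a * t\<rfloor>}. phi \<delta> (Y k \<omega> / c))"
    using G by (simp add: G_def sum_divide_distrib)
  also have "\<dots> = Sp Y a c \<delta> t \<omega>"
    unfolding Sp_def gfun_def by (simp add: sum_subtractf)
  finally show ?thesis unfolding a_def c_def .
qed


lemma gfun_clamp: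
  assumes d: "\<delta> > 0"
  shows "gfun \<delta> x = max (-\<delta>) (min \<delta> x)"
proof (cases "\<bar>x\<bar> \<le> \<delta>")
  case True
  then have "hdelta \<delta> \<bar>x\<bar> = 0"
    unfolding hdelta_def using d by (auto simp: field_simps)
  then show ?thesis using True unfolding gfun_def phi_def by auto
next
  case False
  then have x: "\<bar>x\<bar> > \<delta>" by simp
  then have "hdelta \<delta> \<bar>x\<bar> = 1 - \<delta>/\<bar>x\<bar>"
    unfolding hdelta_def using d by (auto simp: field_simps)
  then have "gfun \<delta> x = x - (1 - \<delta>/\<bar>x\<bar>) * x" unfolding gfun_def phi_def by simp
  also have "\<dots> = \<delta> * x / \<bar>x\<bar>" by (simp add: algebra_simps)
  finally have "gfun \<delta> x = \<delta> * x / \<bar>x\<bar>" .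
  then show ?thesis using x d by (cases "x \<ge> 0") (auto simp: field_simps)
qed

lemma gfun_odd: "\<delta> > 0 \<Longrightarrow> gfun \<delta> (-x) = - gfun \<delta> x"
  by (simp add: gfun_clamp)

lemma gfun_sq_le:
  assumes d: "\<delta> > 0" shows "(gfun \<delta> x)\<^sup>2 \<le> min (x\<^sup>2) (\<delta>\<^sup>2)"
proof -
  have "\<bar>gfun \<delta> x\<bar> \<le> \<bar>x\<bar>" "\<bar>gfun \<delta> x\<bar> \<le> \<delta>" unfolding gfun_clamp[OF d] using d by (auto simp: max_def min_def abs_if)
  then show ?thesis using d by (simp add: abs_le_square_iff[symmetric])
qed

lemma gfun_abs_le: "\<delta> > 0 \<Longrightarrow> \<bar>gfun \<delta> x\<bar> \<le> \<delta>"
  by (simp add: gfun_clamp)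

lemma gfun_borel[measurable]: "gfun \<delta> \<in> borel_measurable borel"
  unfolding gfun_def phi_def hdelta_def by measurable

lemma le_foldr_max: "x \<in> set xs \<Longrightarrow> x \<le> foldr max xs (z::real)"
  by (induction xs) auto

lemma mesh_ge:
  assumes "i < length p - 1"
  shows "p ! Suc i - p ! i \<le> mesh p"
  unfolding mesh_def by (rule le_foldr_max) (use assms in auto)

lemma telescope_sets:
  fixes N :: "nat \<Rightarrow> nat"
  assumes "\<And>i j. i \<le> j \<Longrightarrow> j \<le> m \<Longrightarrow> N i \<le> N j"
  shows "(\<Sum>i<m. \<Sum>j\<in>{N i<..N (Suc i)}. f j) = (\<Sum>j\<in>{N 0<..N m}. (f j :: real))"
  using assms
proof (induction m)
  case 0 then show ?case by simp
next
  case (Suc m)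
  have IH: "(\<Sum>i<m. \<Sum>j\<in>{N i<..N (Suc i)}. f j) = (\<Sum>j\<in>{N 0<..N m}. f j)"
    using Suc.prems by (intro Suc.IH) auto
  have le: "N 0 \<le> N m" "N m \<le> N (Suc m)" using Suc.prems by auto
  have "{N 0<..N (Suc m)} = {N 0<..N m} \<union> {N m<..N (Suc m)}" using le by auto
  then have "(\<Sum>j\<in>{N 0<..N (Suc m)}. f j) = (\<Sum>j\<in>{N 0<..N m}. f j) + (\<Sum>j\<in>{N m<..N (Suc m)}. f j)"
    by (simp add: sum.union_disjoint ivl_disj_int)
  then show ?case using IH by simp
qed

lemma sum_Icc_diff:
  fixes w :: "nat \<Rightarrow> real"
  assumes "N \<le> N'"
  shows "(\<Sum>j\<in>{1..N'}. w j) - (\<Sum>j\<in>{1..N}. w j) = (\<Sum>j\<in>{N<..N'}. w j)"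
proof -
  have "{1..N'} = {1..N} \<union> {N<..N'}" using assms by auto
  then have "(\<Sum>j\<in>{1..N'}. w j) = (\<Sum>j\<in>{1..N}\<union>{N<..N'}. w j)" by simp
  also have "\<dots> = (\<Sum>j\<in>{1..N}. w j) + (\<Sum>j\<in>{N<..N'}. w j)"
    by (rule sum.union_disjoint) auto
  finally have "(\<Sum>j\<in>{1..N'}. w j) = (\<Sum>j\<in>{1..N}. w j) + (\<Sum>j\<in>{N<..N'}. w j)" .
  then show ?thesis by simp
qed

lemma sq_sum_small:
  fixes w :: "nat \<Rightarrow> real"
  assumes "N' \<le> Suc N"
  shows "(\<Sum>j\<in>{N<..N'}. w j)\<^sup>2 = (\<Sum>j\<in>{N<..N'}. (w j)\<^sup>2)"
proof (cases "N' = Suc N")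
  case True
  then have "{N<..N'} = {Suc N}" by auto
  then show ?thesis by simp
next
  case False
  then have "{N<..N'} = {}" using assms by auto
  then show ?thesis by simp
qed

lemma qv_step:
  fixes a t :: real and w :: "nat \<Rightarrow> real"
  assumes a: "a > 0" and p: "is_partition t p" and m: "mesh p < 1/a"
  shows "qv_sum (\<lambda>z. \<Sum>j\<in>{1..nat \<lfloor>a * z\<rfloor>}. w j) p = (\<Sum>j\<in>{1..nat \<lfloor>a * t\<rfloor>}. (w j)\<^sup>2)"
proof -
  define N where "N i = nat \<lfloor>a * (p ! i)\<rfloor>" for i
  let ?m = "length p - 1"
  have ne: "p \<noteq> []" and sw: "sorted_wrt (<) p" and hd: "hd p = 0" and lst: "last p = t"
    using p unfolding is_partition_def by auto
  have mono: "p ! i \<le> p ! j" if "i \<le> j" "j < length p" for i j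
    using sorted_wrt_nth_less[OF sw] that by (cases "i = j") (auto intro: less_imp_le)
  have Nmono: "N i \<le> N j" if "i \<le> j" "j \<le> ?m" for i j
  proof -
    have "j < length p" using that ne by (cases p) auto
    then have "a * p ! i \<le> a * p ! j" using mono that a by auto
    then show ?thesis unfolding N_def by (intro nat_mono floor_mono)
  qed
  have Nstep: "N (Suc i) \<le> Suc (N i)" if "i < ?m" for i
  proof -
    have "p ! Suc i - p ! i < 1/a" using mesh_ge[OF that] m by linarith
    then have "a * p ! Suc i < a * p ! i + 1" using a by (simp add: field_simps)
    then have "\<lfloor>a * p ! Suc i\<rfloor> \<le> \<lfloor>a * p ! i\<rfloor> + 1" by linarith
    then show ?thesis unfolding N_def by linarith
  qed
  have "qv_sum (\<lambda>z. \<Sum>j\<in>{1..nat \<lfloor>a * z\<rfloor>}. w j) p =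
      (\<Sum>i<?m. \<Sum>j\<in>{N i<..N (Suc i)}. (w j)\<^sup>2)"
    unfolding qv_sum_def
  proof (rule sum.cong)
    fix i assume "i \<in> {..<?m}"
    then have i: "i < ?m" by simp
    have "(\<Sum>j\<in>{1..N (Suc i)}. w j) - (\<Sum>j\<in>{1..N i}. w j) = (\<Sum>j\<in>{N i<..N (Suc i)}. w j)"
      using Nmono[of i "Suc i"] i by (intro sum_Icc_diff) auto
    then show "((\<Sum>j\<in>{1..nat \<lfloor>a * p ! Suc i\<rfloor>}. w j) - (\<Sum>j\<in>{1..nat \<lfloor>a * p ! i\<rfloor>}. w j))\<^sup>2 =
        (\<Sum>j\<in>{N i<..N (Suc i)}. (w j)\<^sup>2)"
      using sq_sum_small[OF Nstep[OF i], of w] unfolding N_def by simp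
  qed simp
  also have "\<dots> = (\<Sum>j\<in>{N 0<..N ?m}. (w j)\<^sup>2)"
    by (rule telescope_sets) (use Nmono in auto)
  also have "N 0 = 0" unfolding N_def using hd ne by (simp add: hd_conv_nth)
  also have "N ?m = nat \<lfloor>a * t\<rfloor>" unfolding N_def using lst ne by (simp add: last_conv_nth)
  also have "{0<..nat \<lfloor>a * t\<rfloor>} = {1..nat \<lfloor>a * t\<rfloor>}" by auto
  finally show ?thesis .
qed

lemma tv_zero: "total_variation (\<lambda>s. 0) t = 0"
  unfolding total_variation_def by (intro antisym SUP_least) auto


lemma aux_lin: fixes S Y :: real assumes "S \<le> 1 - 2/15*Y" "0 \<le> Y" shows "Y \<le> 10*(1-S)"
  using assms by (simp add: field_simps)

lemma sin_ineq_pos: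
  fixes y :: real assumes y: "y > 0"
  shows "min (y\<^sup>2) 1 \<le> 10 * (1 - sin y / y)"
proof (cases "y \<ge> 2")
  case True
  have "sin y \<le> 1" by simp
  then have "sin y / y \<le> 1 / y" using y by (simp add: divide_right_mono)
  also have "1 / y \<le> 1/2" using True by (simp add: field_simps)
  finally show ?thesis by simp
next
  case False
  have "\<bar>sin y - (\<Sum>m<5. sin_coeff m * y ^ m)\<bar> \<le> inverse (fact 5) * \<bar>y\<bar> ^ 5"
    by (rule Maclaurin_sin_bound)
  moreover have "(\<Sum>m<5. sin_coeff m * y ^ m) = y - y^3/6"
    by (simp add: lessThan_nat_numeral sin_coeff_def fact_numeral)
  moreover have "inverse (fact 5) * \<bar>y\<bar> ^ 5 = y^5/120" using y
    by (simp add: fact_numeral field_simps)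
  ultimately have s: "sin y \<le> y - y^3/6 + y^5/120" by linarith
  have "y^2 \<le> 2^2" using False y by (intro power_mono) auto
  then have "y^2 \<le> 4" by simp
  then have "y^2 * y^3 \<le> 4 * y^3" using y by (intro mult_right_mono) auto
  then have "y^5 \<le> 4 * y^3" by (simp add: power_add[symmetric])
  with s have "sin y \<le> y - (2/15) * y^3" by linarith
  moreover have "y - (2/15) * y^3 = (1 - (2/15) * y^2) * y"
    by (simp add: algebra_simps power2_eq_square power3_eq_cube)
  ultimately have "sin y \<le> (1 - (2/15) * y^2) * y" by simp
  then have "sin y / y \<le> ((1 - (2/15) * y^2) * y) / y"
    using y by (intro divide_right_mono) auto
  then have "sin y / y \<le> 1 - (2/15) * y^2" using y by simp
  then have "y\<^sup>2 \<le> 10 * (1 - sin y / y)" using zero_le_power2[of y] by (rule aux_lin)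
  then show ?thesis by linarith
qed

lemma sin_ineq:
  fixes y :: real assumes y: "y \<noteq> 0"
  shows "min (y\<^sup>2) 1 \<le> 10 * (1 - sin y / y)"
proof (cases "y > 0")
  case True then show ?thesis by (rule sin_ineq_pos)
next
  case False
  then have "-y > 0" using y by simp
  from sin_ineq_pos[OF this] show ?thesis by simp
qed

lemma kint:
  fixes y :: real
  shows "(\<integral>\<^sup>+u. ennreal ((1 - cos (u * y)) * indicator {0..1} u) \<partial>lborel) =
    ennreal (if y = 0 then 0 else 1 - sin y / y)"
proof (cases "y = 0")
  case True then show ?thesis by simp
next
  case False
  have "(\<integral>\<^sup>+u. ennreal ((1 - cos (u * y)) * indicator {0..1} u) \<partial>lborel) = 1 - sin y / y"
  proof (rule nn_integral_has_integral_lborel)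
    show "(\<lambda>u. (1 - cos (u * y)) * indicator {0..1} u) \<in> borel_measurable borel" by measurable
    show "\<And>u. 0 \<le> (1 - cos (u * y)) * indicator {0..1} (u::real)" by (simp add: indicator_def)
    have eq: "(\<lambda>u. (1 - cos (u * y)) * indicator {0..1} u) = (\<lambda>u. if u \<in> {0..1} then 1 - cos (u * y) else 0)"
      by (auto simp: indicator_def)
    have "((\<lambda>u. 1 - cos (u * y)) has_integral ((1 - sin (1 * y) / y) - (0 - sin (0 * y) / y))) {0..1::real}"
    proof (rule fundamental_theorem_of_calculus)
      fix u :: real assume "u \<in> {0..1}"
      have "((\<lambda>u. u - sin (u * y) / y) has_real_derivative (1 - cos (u * y))) (at u within {0..1})"
        using False by (auto intro!: derivative_eq_intros simp: field_simps)
      then show "((\<lambda>u. u - sin (u * y) / y) has_vector_derivative (1 - cos (u * y))) (at u within {0..1})"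
        by (simp add: has_real_derivative_iff_has_vector_derivative)
    qed simp
    then show "((\<lambda>u. (1 - cos (u * y)) * indicator {0..1} u) has_integral (1 - sin y / y)) UNIV"
      unfolding eq has_integral_restrict_UNIV by simp
  qed
  then show ?thesis using False by simp
qed

lemma char_cos:
  assumes "real_distribution \<mu>"
  shows "(\<integral>x. cos (v * x) \<partial>\<mu>) = Re (char \<mu> v)"
proof -
  interpret real_distribution \<mu> by fact
  have "integrable \<mu> (\<lambda>x. iexp (v * x))"
    by (rule integrable_iexp) auto
  then have "(\<integral>x. Re (iexp (v * x)) \<partial>\<mu>) = Re (char \<mu> v)"
    unfolding char_def by (rule integral_Re)
  then show ?thesis by (simp add: Re_exp)
qed

lemma stable_moment:
  fixes \<mu> :: "real measure"
  assumes D: "real_distribution \<mu>"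
    and ch: "\<And>u. char \<mu> u = complex_of_real (exp (- C * \<bar>u\<bar> powr \<alpha>))"
    and C: "C > 0" and al: "\<alpha> > 0" and b: "b > 0"
  shows "(\<integral>\<^sup>+x. ennreal (min ((x/b)\<^sup>2) 1) \<partial>\<mu>) \<le> ennreal (10 * (C * b powr (-\<alpha>)))"
proof -
  interpret mu: real_distribution \<mu> by fact
  interpret P: pair_sigma_finite \<mu> lborel
    by (intro pair_sigma_finite.intro mu.sigma_finite_measure_axioms lborel.sigma_finite_measure_axioms)
  have sets_mu[measurable_cong]: "sets \<mu> = sets borel" by simp
  have mono10: "\<And>x y::ennreal. x \<le> y \<Longrightarrow> 10 * x \<le> 10 * y" by (simp add: mult_left_mono)
  define f where "f x u = ennreal ((1 - cos (u * (x/b))) * indicator {0..1} u)" for x u :: real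
  have fm[measurable]: "case_prod f \<in> borel_measurable (\<mu> \<Otimes>\<^sub>M lborel)"
    unfolding f_def by measurable
  have pw: "(\<integral>\<^sup>+x. f x u \<partial>\<mu>) \<le> ennreal (C * b powr (-\<alpha>)) * indicator {0..1} u" for u :: real
  proof -
    show "(\<integral>\<^sup>+x. f x u \<partial>\<mu>) \<le> ennreal (C * b powr (-\<alpha>)) * indicator {0..1} u"
    proof (cases "u \<in> {0..1}")
      case False then show ?thesis unfolding f_def by simp
    next
      case True
      have P1: "measure \<mu> UNIV = 1" using mu.prob_space by simp
      have int: "integrable \<mu> (\<lambda>x. 1 - cos (u / b * x))"
        by (intro mu.integrable_const_bound[where B=2]) auto
      have "(\<integral>x. 1 - cos (u / b * x) \<partial>\<mu>) = 1 - Re (char \<mu> (u/b))"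
        using char_cos[OF D, of "u/b"] by (simp add: Bochner_Integration.integral_diff[OF _ mu.integrable_const_bound[where B=1]] P1)
      also have "\<dots> = 1 - exp (- C * \<bar>u/b\<bar> powr \<alpha>)" by (simp add: ch)
      also have "\<dots> \<le> C * \<bar>u/b\<bar> powr \<alpha>"
        using exp_ge_add_one_self[of "- C * \<bar>u/b\<bar> powr \<alpha>"] by simp
      also have "\<bar>u/b\<bar> powr \<alpha> = u powr \<alpha> * b powr (-\<alpha>)"
      proof -
        have "\<bar>u/b\<bar> powr \<alpha> = (u/b) powr \<alpha>" using True b by simp
        also have "\<dots> = u powr \<alpha> / b powr \<alpha>" using True b by (intro powr_divide)
        also have "\<dots> = u powr \<alpha> * b powr (-\<alpha>)" by (simp add: powr_minus divide_inverse)
        finally show ?thesis .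
      qed
      also have "C * (u powr \<alpha> * b powr (-\<alpha>)) \<le> C * (1 * b powr (-\<alpha>))"
        using True al C by (intro mult_left_mono mult_right_mono) (auto simp: powr_le1)
      finally have real_le: "(\<integral>x. 1 - cos (u / b * x) \<partial>\<mu>) \<le> C * b powr (-\<alpha>)" by simp
      have "(\<integral>\<^sup>+x. f x u \<partial>\<mu>) = (\<integral>\<^sup>+x. ennreal (1 - cos (u / b * x)) \<partial>\<mu>)"
        unfolding f_def using True by (intro nn_integral_cong) (simp add: mult.commute)
      also have "\<dots> = ennreal (\<integral>x. 1 - cos (u / b * x) \<partial>\<mu>)"
        by (rule nn_integral_eq_integral[OF int]) auto
      also have "\<dots> \<le> ennreal (C * b powr (-\<alpha>))"
        using real_le by (rule ennreal_leI)
      finally have "(\<integral>\<^sup>+x. f x u \<partial>\<mu>) \<le> ennreal (C * b powr (-\<alpha>))" .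
      then show ?thesis using True by simp
    qed
  qed
  have "(\<integral>\<^sup>+x. ennreal (min ((x/b)\<^sup>2) 1) \<partial>\<mu>) \<le> (\<integral>\<^sup>+x. 10 * (\<integral>\<^sup>+u. f x u \<partial>lborel) \<partial>\<mu>)"
  proof (rule nn_integral_mono)
    fix x :: real
    show "ennreal (min ((x/b)\<^sup>2) 1) \<le> 10 * (\<integral>\<^sup>+u. f x u \<partial>lborel)"
    proof (cases "x = 0")
      case True then show ?thesis by simp
    next
      case False
      then have ne: "x/b \<noteq> 0" using b by simp
      define r where "r = 1 - sin (x/b) / (x/b)"
      have le: "min ((x/b)\<^sup>2) 1 \<le> 10 * r" unfolding r_def by (rule sin_ineq[OF ne])
      have "0 \<le> min ((x/b)\<^sup>2) 1" by simp
      then have r0: "0 \<le> r" using le by linarith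
      have "(\<integral>\<^sup>+u. f x u \<partial>lborel) = ennreal r"
        unfolding f_def kint r_def using ne by simp
      moreover have "ennreal (min ((x/b)\<^sup>2) 1) \<le> ennreal (10 * r)"
        using le by (rule ennreal_leI)
      moreover have "ennreal (10 * r) = 10 * ennreal r"
        using ennreal_mult[of 10 r] r0 by simp
      ultimately show ?thesis by simp
    qed
  qed
  also have "\<dots> = 10 * (\<integral>\<^sup>+x. (\<integral>\<^sup>+u. f x u \<partial>lborel) \<partial>\<mu>)"
    by (rule nn_integral_cmult) measurable
  also have "(\<integral>\<^sup>+x. (\<integral>\<^sup>+u. f x u \<partial>lborel) \<partial>\<mu>) = (\<integral>\<^sup>+u. (\<integral>\<^sup>+x. f x u \<partial>\<mu>) \<partial>lborel)"
    by (rule P.Fubini'[symmetric]) (rule fm)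
  also have "(\<integral>\<^sup>+u. (\<integral>\<^sup>+x. f x u \<partial>\<mu>) \<partial>lborel) \<le> (\<integral>\<^sup>+u. ennreal (C * b powr (-\<alpha>)) * indicator {0..1} (u::real) \<partial>lborel)"
    by (intro nn_integral_mono pw)
  also have "\<dots> = ennreal (C * b powr (-\<alpha>))"
    by (simp add: nn_integral_cmult_indicator)
  finally have fin: "(\<integral>\<^sup>+x. ennreal (min ((x/b)\<^sup>2) 1) \<partial>\<mu>) \<le> 10 * ennreal (C * b powr (-\<alpha>))"
    using mono10 by blast
  have "ennreal (10 * (C * b powr (-\<alpha>))) = 10 * ennreal (C * b powr (-\<alpha>))"
    using ennreal_mult[of 10 "C * b powr (-\<alpha>)"] C by simp
  then show ?thesis using fin by simp
qed


locale proc = prob_space M for M :: "'a measure" +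
  fixes Y :: "nat \<Rightarrow> 'a \<Rightarrow> real" and a c \<delta> :: real
  assumes Ym[measurable]: "\<And>i. Y i \<in> borel_measurable M"
    and indep: "indep_vars (\<lambda>_. borel) Y UNIV"
    and apos: "a > 0" and cpos: "c > 0" and dpos: "\<delta> > 0"
    and mean0: "\<And>i. (\<integral>\<omega>. gfun \<delta> (Y i \<omega> / c) \<partial>M) = 0"
begin

abbreviation "XX \<equiv> (\<lambda>r \<omega>. (\<Sum>i\<in>{1..nat \<lfloor>a * r\<rfloor>}. Y i \<omega>) / c)"
abbreviation "FF \<equiv> nat_filtration M XX"
definition "Gen s = {XX r -` B \<inter> space M | r B. 0 \<le> r \<and> r \<le> s \<and> B \<in> sets borel}"
definition "E j = {Y j -` A \<inter> space M | A. A \<in> sets borel}"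
definition "SY J = sigma_sets (space M) (\<Union>j\<in>J. E j)"
abbreviation "S \<equiv> Sp Y a c \<delta>"

lemma XX_meas[measurable]: "XX r \<in> borel_measurable M"
  by measurable

lemma Gen_sub: "Gen s \<subseteq> Pow (space M)" unfolding Gen_def by auto

lemma FF_eq: "FF s = sigma (space M) (Gen s)" unfolding nat_filtration_def Gen_def by simp

lemma sets_FF: "sets (FF s) = sigma_sets (space M) (Gen s)"
  unfolding FF_eq by (rule sets_measure_of[OF Gen_sub])

lemma space_FF: "space (FF s) = space M"
  unfolding FF_eq by (rule space_measure_of[OF Gen_sub])

lemma Gen_events: "Gen s \<subseteq> sets M"
  unfolding Gen_def by auto

lemma subalg: "subalgebra M (FF s)"
  unfolding subalgebra_def sets_FF space_FF using sets.sigma_sets_subset[OF Gen_events] by auto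

lemma XX_FF: assumes "0 \<le> r" "r \<le> s" shows "XX r \<in> borel_measurable (FF s)"
proof (rule measurableI)
  fix B :: "real set" assume "B \<in> sets borel"
  then have "XX r -` B \<inter> space M \<in> Gen s" unfolding Gen_def using assms by blast
  then show "XX r -` B \<inter> space (FF s) \<in> sets (FF s)" unfolding sets_FF space_FF by blast
qed simp

lemma idx_le: assumes "1 \<le> i" "i \<le> nat \<lfloor>a * s\<rfloor>" shows "real i / a \<le> s"
proof -
  have "int i \<le> \<lfloor>a * s\<rfloor>" using assms by linarith
  then have "real i \<le> a * s" by linarith
  then show ?thesis using apos by (simp add: divide_le_eq mult.commute)
qed

lemma Y_FF: assumes "1 \<le> i" "i \<le> nat \<lfloor>a * s\<rfloor>" shows "Y i \<in> borel_measurable (FF s)"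
proof -
  have fl: "nat \<lfloor>a * (real k / a)\<rfloor> = k" for k :: nat using apos by simp
  have eq: "Y i = (\<lambda>\<omega>. c * (XX (real i / a) \<omega> - XX (real (i-1) / a) \<omega>))"
  proof
    fix \<omega>
    have "{1..i} = insert i {1..i-1}" using assms by auto
    then have "(\<Sum>j\<in>{1..i}. Y j \<omega>) = Y i \<omega> + (\<Sum>j\<in>{1..i-1}. Y j \<omega>)" using assms by simp
    then show "Y i \<omega> = c * (XX (real i / a) \<omega> - XX (real (i-1) / a) \<omega>)"
      unfolding fl using cpos by (simp add: field_simps)
  qed
  have le1: "real i / a \<le> s" by (rule idx_le[OF assms])
  have le2: "real (i-1) / a \<le> real i / a" using apos by (simp add: divide_right_mono)
  have [measurable]: "XX (real i / a) \<in> borel_measurable (FF s)"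
    by (rule XX_FF) (use le1 apos in auto)
  have [measurable]: "XX (real (i-1) / a) \<in> borel_measurable (FF s)"
    by (rule XX_FF) (use le1 le2 apos in auto)
  show ?thesis unfolding eq by measurable
qed

lemma gY_meas:
  assumes "Y i \<in> borel_measurable N"
  shows "(\<lambda>\<omega>. gfun \<delta> (Y i \<omega> / c)) \<in> borel_measurable N"
  by (rule measurable_compose[OF _ gfun_borel]) (use assms in measurable)

lemma S_FF: assumes "nat \<lfloor>a * t\<rfloor> \<le> nat \<lfloor>a * s\<rfloor>" shows "S t \<in> borel_measurable (FF s)"
  unfolding Sp_def
  by (intro borel_measurable_sum gY_meas Y_FF) (use assms in auto)

lemma E_sub: "(\<Union>j\<in>J. E j) \<subseteq> Pow (space M)" unfolding E_def by auto

lemma Y_SY: assumes "j \<in> J" shows "Y j \<in> borel_measurable (sigma (space M) (\<Union>j\<in>J. E j))"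
proof (rule measurableI)
  fix A :: "real set" assume "A \<in> sets borel"
  then have "Y j -` A \<inter> space M \<in> (\<Union>j\<in>J. E j)" unfolding E_def using assms by blast
  then show "Y j -` A \<inter> space (sigma (space M) (\<Union>j\<in>J. E j)) \<in> sets (sigma (space M) (\<Union>j\<in>J. E j))"
    unfolding sets_measure_of[OF E_sub] space_measure_of[OF E_sub] by blast
qed simp

lemma sets_SYm: "sets (sigma (space M) (\<Union>j\<in>J. E j)) = SY J"
  unfolding SY_def by (rule sets_measure_of[OF E_sub])

lemma space_SYm: "space (sigma (space M) (\<Union>j\<in>J. E j)) = space M"
  by (rule space_measure_of[OF E_sub])

lemma FF_SY: "sets (FF s) \<subseteq> SY {..nat \<lfloor>a * s\<rfloor>}"
  unfolding sets_FF SY_def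
proof (rule sigma_sets_mono, rule subsetI)
  fix x assume "x \<in> Gen s"
  then obtain r B where x: "x = XX r -` B \<inter> space M" "0 \<le> r" "r \<le> s" "B \<in> sets borel"
    unfolding Gen_def by blast
  have le: "nat \<lfloor>a * r\<rfloor> \<le> nat \<lfloor>a * s\<rfloor>" using x apos by (intro nat_mono floor_mono) simp
  have "XX r \<in> borel_measurable (sigma (space M) (\<Union>j\<in>{..nat \<lfloor>a * s\<rfloor>}. E j))"
    by (intro borel_measurable_divide borel_measurable_sum Y_SY) (use le in auto)
  from measurable_sets[OF this x(4)] show "x \<in> sigma_sets (space M) (\<Union>j\<in>{..nat \<lfloor>a * s\<rfloor>}. E j)"
    unfolding x(1) sets_measure_of[OF E_sub] space_measure_of[OF E_sub] .
qed

lemma indep_SY: "indep_set (SY {..N}) (SY {N<..})"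
proof -
  have "indep_sets (\<lambda>i. sigma_sets (space M) (E i)) UNIV"
    using indep unfolding indep_vars_def E_def by blast
  then have iE: "indep_sets E UNIV"
    by (rule indep_sets_mono_sets) auto
  define I where "I = case_bool {..N} {N<..}"
  have "indep_sets (\<lambda>j. sigma_sets (space M) (\<Union>i\<in>I j. E i)) UNIV"
  proof (rule indep_sets_collect_sigma)
    show "indep_sets E (\<Union>j\<in>UNIV. I j)" by (rule indep_sets_mono_index[OF _ iE]) auto
    show "Int_stable (E i)" for i
      unfolding Int_stable_def E_def
    proof (safe)
      fix A B :: "real set" assume "A \<in> sets borel" "B \<in> sets borel"
      then show "\<exists>C. Y i -` A \<inter> space M \<inter> (Y i -` B \<inter> space M) = Y i -` C \<inter> space M \<and> C \<in> sets borel"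
        by (intro exI[of _ "A \<inter> B"]) auto
    qed
    show "disjoint_family_on I UNIV"
      unfolding disjoint_family_on_def I_def by (auto split: bool.split)
  qed
  moreover have "(\<lambda>j. sigma_sets (space M) (\<Union>i\<in>I j. E i)) = case_bool (SY {..N}) (SY {N<..})"
    unfolding I_def SY_def
  proof (rule ext)
    fix j show "sigma_sets (space M) (\<Union>i\<in>case_bool {..N} {N<..} j. E i) =
      case_bool (sigma_sets (space M) (\<Union>j\<in>{..N}. E j)) (sigma_sets (space M) (\<Union>j\<in>{N<..}. E j)) j"
      by (cases j) simp_all
  qed
  ultimately show ?thesis unfolding indep_set_def by simp
qed

lemma gY_int: "integrable M (\<lambda>\<omega>. gfun \<delta> (Y i \<omega> / c))"
  by (rule integrable_const_bound[where B=\<delta>]) (auto simp: gfun_abs_le[OF dpos] intro: gY_meas)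

lemma D_int: "integrable M (\<lambda>\<omega>. \<Sum>i\<in>I. gfun \<delta> (Y i \<omega> / c))"
  by (intro Bochner_Integration.integrable_sum gY_int)

lemma D_mean: "(\<integral>\<omega>. (\<Sum>i\<in>I. gfun \<delta> (Y i \<omega> / c)) \<partial>M) = 0"
  by (subst Bochner_Integration.integral_sum) (auto intro: gY_int simp: mean0)

lemma int_zero:
  assumes A: "A \<in> sets (FF s)"
  shows "(\<integral>\<omega>. indicator A \<omega> * (\<Sum>i\<in>{nat \<lfloor>a * s\<rfloor><..N'}. gfun \<delta> (Y i \<omega> / c)) \<partial>M) = 0"
proof -
  define N where "N = nat \<lfloor>a * s\<rfloor>"
  define D where "D \<omega> = (\<Sum>i\<in>{N<..N'}. gfun \<delta> (Y i \<omega> / c))" for \<omega>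
  have AM: "A \<in> sets M" using A subalg unfolding subalgebra_def by auto
  have Dm: "D \<in> borel_measurable (sigma (space M) (\<Union>j\<in>{N<..}. E j))"
    unfolding D_def by (intro borel_measurable_sum gY_meas Y_SY) auto
  have Dm'[measurable]: "D \<in> borel_measurable M" unfolding D_def by (intro borel_measurable_sum gY_meas Ym)
  have Am: "indicator A \<in> borel_measurable (FF s)" using A by simp
  have ind: "indep_set (SY {..N}) (SY {N<..})" by (rule indep_SY)
  have s1: "sigma_sets (space M) {indicator A -` B \<inter> space M | B. B \<in> sets (borel :: real measure)} \<subseteq> SY {..N}"
    unfolding SY_def
  proof (rule sigma_sets_mono, safe)
    fix B :: "real set" assume "B \<in> sets borel"
    from measurable_sets[OF Am this] have "indicator A -` B \<inter> space M \<in> sets (FF s)"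
      unfolding space_FF .
    then show "indicator A -` B \<inter> space M \<in> sigma_sets (space M) (\<Union>j\<in>{..N}. E j)"
      using FF_SY unfolding N_def SY_def by blast
  qed
  have s2: "sigma_sets (space M) {D -` B \<inter> space M | B. B \<in> sets (borel :: real measure)} \<subseteq> SY {N<..}"
    unfolding SY_def
  proof (rule sigma_sets_mono, safe)
    fix B :: "real set" assume "B \<in> sets borel"
    from measurable_sets[OF Dm this] show "D -` B \<inter> space M \<in> sigma_sets (space M) (\<Union>j\<in>{N<..}. E j)"
      unfolding sets_measure_of[OF E_sub] space_measure_of[OF E_sub] .
  qed
  have "indep_var borel (indicator A) borel D"
    unfolding indep_var_eq
  proof (intro conjI)
    show "random_variable borel (indicator A :: 'a \<Rightarrow> real)" using AM by simp
    show "random_variable borel D" by simp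
    show "indep_set (sigma_sets (space M) {indicator A -` B \<inter> space M | B. B \<in> sets (borel :: real measure)})
        (sigma_sets (space M) {D -` B \<inter> space M | B. B \<in> sets (borel :: real measure)})"
      using ind s1 s2 unfolding indep_sets2_eq by blast
  qed
  moreover have "integrable M (indicator A :: 'a \<Rightarrow> real)"
    using AM by (intro integrable_const_bound[where B=1]) (auto simp: indicator_def)
  moreover have "integrable M D" unfolding D_def by (rule D_int)
  ultimately have "(\<integral>\<omega>. indicator A \<omega> * D \<omega> \<partial>M) = (\<integral>\<omega>. indicator A \<omega> \<partial>M) * (\<integral>\<omega>. D \<omega> \<partial>M)"
    by (rule indep_var_lebesgue_integral)
  also have "(\<integral>\<omega>. D \<omega> \<partial>M) = 0" unfolding D_def by (rule D_mean)
  finally show ?thesis unfolding D_def N_def by simp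
qed

lemma S_int: "integrable M (S t)"
  unfolding Sp_def by (rule D_int)

lemma mart:
  assumes st: "s \<le> t"
  shows "AE \<omega> in M. real_cond_exp M (FF s) (S t) \<omega> = S s \<omega>"
proof -
  interpret FS: finite_measure_subalgebra M "FF s" by unfold_locales (rule subalg)
  define N where "N = nat \<lfloor>a * s\<rfloor>"
  define N' where "N' = nat \<lfloor>a * t\<rfloor>"
  have NN: "N \<le> N'" unfolding N_def N'_def using st apos by (intro nat_mono floor_mono) simp
  have decomp: "S t \<omega> = S s \<omega> + (\<Sum>i\<in>{N<..N'}. gfun \<delta> (Y i \<omega> / c))" for \<omega>
    unfolding Sp_def N_def[symmetric] N'_def[symmetric]
    using sum_Icc_diff[OF NN, of "\<lambda>i. gfun \<delta> (Y i \<omega> / c)"] by simp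
  show ?thesis
  proof (rule FS.real_cond_exp_charact)
    fix A assume A: "A \<in> sets (FF s)"
    have AM: "A \<in> sets M" using A subalg unfolding subalgebra_def by auto
    have i1: "integrable M (\<lambda>x. indicator A x * S s x)"
      using integrable_mult_indicator[OF AM S_int, of s] by simp
    have i2: "integrable M (\<lambda>x. indicator A x * (\<Sum>i\<in>{N<..N'}. gfun \<delta> (Y i x / c)))"
      using integrable_mult_indicator[OF AM D_int, of "{N<..N'}"] by simp
    have "(\<integral>x\<in>A. S t x \<partial>M) = (\<integral>x. indicator A x * S s x + indicator A x * (\<Sum>i\<in>{N<..N'}. gfun \<delta> (Y i x / c)) \<partial>M)"
      unfolding set_lebesgue_integral_def decomp by (simp add: algebra_simps)
    also have "\<dots> = (\<integral>x. indicator A x * S s x \<partial>M) + (\<integral>x. indicator A x * (\<Sum>i\<in>{N<..N'}. gfun \<delta> (Y i x / c)) \<partial>M)"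
      by (rule Bochner_Integration.integral_add[OF i1 i2])
    also have "(\<integral>x. indicator A x * (\<Sum>i\<in>{N<..N'}. gfun \<delta> (Y i x / c)) \<partial>M) = 0"
      unfolding N_def by (rule int_zero[OF A])
    finally show "(\<integral>x\<in>A. S t x \<partial>M) = (\<integral>x\<in>A. S s x \<partial>M)"
      unfolding set_lebesgue_integral_def by simp
  next
    show "integrable M (S t)" by (rule S_int)
    show "integrable M (S s)" by (rule S_int)
    show "S s \<in> borel_measurable (FF s)" by (rule S_FF) simp
  qed
qed

end


context proc begin

lemma S_path: "(\<lambda>t. S t \<omega>) = (\<lambda>z. (\<lambda>N. \<Sum>i\<in>{1..N}. gfun \<delta> (Y i \<omega> / c)) (nat \<lfloor>a * z\<rfloor>))"
  unfolding Sp_def by simp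

lemma S_cadlag: "cadlag (\<lambda>t. S t \<omega>)"
  unfolding S_path by (rule step_cadlag[OF apos])

lemma const_stop: "stopping_time FF (\<lambda>\<omega>. x)"
  unfolding stopping_time_def by simp

lemma stopped_mart: "martingale M FF (\<lambda>t \<omega>. S (min t (real k)) \<omega>)"
  unfolding martingale_def adapted_def
proof (intro conjI allI impI)
  fix t :: real assume "0 \<le> t"
  have "nat \<lfloor>a * min t (real k)\<rfloor> \<le> nat \<lfloor>a * t\<rfloor>" using apos by (intro nat_mono floor_mono) simp
  then show "S (min t (real k)) \<in> borel_measurable (FF t)" by (rule S_FF)
next
  fix t :: real show "integrable M (S (min t (real k)))" by (rule S_int)
next
  fix s t :: real assume st: "0 \<le> s \<and> s \<le> t"
  interpret FS: finite_measure_subalgebra M "FF s" by unfold_locales (rule subalg)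
  show "AE \<omega> in M. real_cond_exp M (FF s) (S (min t (real k))) \<omega> = S (min s (real k)) \<omega>"
  proof (cases "real k \<le> s")
    case True
    then have eq: "min t (real k) = real k" "min s (real k) = real k" using st by auto
    have "nat \<lfloor>a * real k\<rfloor> \<le> nat \<lfloor>a * s\<rfloor>" using apos True by (intro nat_mono floor_mono) simp
    then have "S (real k) \<in> borel_measurable (FF s)" by (rule S_FF)
    then show ?thesis unfolding eq by (intro FS.real_cond_exp_F_meas S_int)
  next
    case False
    then have eq: "min s (real k) = s" and le: "s \<le> min t (real k)" using st by auto
    show ?thesis unfolding eq by (rule mart[OF le])
  qed
qed

lemma local_mart: "local_martingale M FF S"
  unfolding local_martingale_def
proof (intro conjI ballI)
  show "adapted FF S" unfolding adapted_def using S_FF[OF order_refl] by blast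
  fix \<omega> show "cadlag (\<lambda>t. S t \<omega>)" by (rule S_cadlag)
next
  show "\<exists>\<tau> :: nat \<Rightarrow> 'a \<Rightarrow> real.
        (\<forall>k. stopping_time FF (\<tau> k) \<and> (\<forall>\<omega>\<in>space M. 0 \<le> \<tau> k \<omega>)) \<and>
        (AE \<omega> in M. mono (\<lambda>k. \<tau> k \<omega>) \<and> filterlim (\<lambda>k. \<tau> k \<omega>) at_top sequentially) \<and>
        (\<forall>k. martingale M FF (\<lambda>t \<omega>. S (min t (\<tau> k \<omega>)) \<omega>))"
    by (rule exI[of _ "\<lambda>k \<omega>. real k"], intro conjI allI ballI AE_I2 const_stop stopped_mart)
       (auto simp: mono_def filterlim_real_sequentially)
qed

lemma Q_meas: "Qp Y a c \<delta> t \<in> borel_measurable M"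
  unfolding Qp_def by (intro borel_measurable_sum borel_measurable_power gY_meas Ym)

lemma qv: "quadratic_variation M S (Qp Y a c \<delta>)"
  unfolding quadratic_variation_def
proof (intro conjI ballI allI impI)
  fix \<omega> t
  have "(\<lambda>s. Qp Y a c \<delta> s \<omega>) = (\<lambda>z. (\<lambda>N. \<Sum>i\<in>{1..N}. (gfun \<delta> (Y i \<omega> / c))\<^sup>2) (nat \<lfloor>a * z\<rfloor>))"
    unfolding Qp_def by simp
  then show "continuous (at_right t) (\<lambda>s. Qp Y a c \<delta> s \<omega>)" using step_right[OF apos] by simp
next
  fix t :: real assume "0 \<le> t" show "Qp Y a c \<delta> t \<in> borel_measurable M" by (rule Q_meas)
next
  fix t :: real and P :: "nat \<Rightarrow> real list" and \<epsilon> :: real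
  assume t: "0 \<le> t" and P: "(\<forall>k. is_partition t (P k)) \<and> (\<lambda>k. mesh (P k)) \<longlonglongrightarrow> 0" and e: "\<epsilon> > 0"
  have ev: "eventually (\<lambda>k. mesh (P k) < 1/a) sequentially"
    using P apos by (intro order_tendstoD(2)) auto
  have "eventually (\<lambda>k. measure M {\<omega> \<in> space M. \<epsilon> < \<bar>qv_sum (\<lambda>s. S s \<omega>) (P k) - Qp Y a c \<delta> t \<omega>\<bar>} = 0) sequentially"
    using ev
  proof eventually_elim
    case (elim k)
    have "qv_sum (\<lambda>s. S s \<omega>) (P k) = Qp Y a c \<delta> t \<omega>" for \<omega>
      unfolding Sp_def Qp_def using qv_step[OF apos _ elim] P by blast
    then show ?case using e by simp
  qed
  then show "(\<lambda>k. measure M {\<omega> \<in> space M. \<epsilon> < \<bar>qv_sum (\<lambda>s. S s \<omega>) (P k) - Qp Y a c \<delta> t \<omega>\<bar>}) \<longlonglongrightarrow> 0"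
    by (rule tendsto_eventually)
qed

lemma fv_zero: "finite_variation_process M FF (\<lambda>t \<omega>. 0)"
  unfolding finite_variation_process_def adapted_def cadlag_def
  by (auto simp: tv_zero continuous_const)

lemma Q_bound:
  assumes K: "\<And>i. (\<integral>\<^sup>+\<omega>. ennreal ((gfun \<delta> (Y i \<omega> / c))\<^sup>2) \<partial>M) \<le> ennreal K"
  shows "(\<integral>\<^sup>+\<omega>. ennreal (Qp Y a c \<delta> r \<omega>) \<partial>M) \<le> of_nat (nat \<lfloor>a * r\<rfloor>) * ennreal K"
proof -
  have "(\<integral>\<^sup>+\<omega>. ennreal (Qp Y a c \<delta> r \<omega>) \<partial>M) =
      (\<integral>\<^sup>+\<omega>. (\<Sum>i\<in>{1..nat \<lfloor>a * r\<rfloor>}. ennreal ((gfun \<delta> (Y i \<omega> / c))\<^sup>2)) \<partial>M)"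
    unfolding Qp_def by (intro nn_integral_cong) (simp add: sum_ennreal)
  also have "\<dots> = (\<Sum>i\<in>{1..nat \<lfloor>a * r\<rfloor>}. \<integral>\<^sup>+\<omega>. ennreal ((gfun \<delta> (Y i \<omega> / c))\<^sup>2) \<partial>M)"
    by (rule nn_integral_sum) (intro measurable_compose[OF _ measurable_ennreal] borel_measurable_power gY_meas Ym)
  also have "\<dots> \<le> (\<Sum>i\<in>{1..nat \<lfloor>a * r\<rfloor>}. ennreal K)"
    by (intro sum_mono K)
  also have "\<dots> = of_nat (nat \<lfloor>a * r\<rfloor>) * ennreal K" by simp
  finally show ?thesis .
qed

end


lemma sym_zero:
  fixes \<mu> :: "real measure" and h :: "real \<Rightarrow> real"
  assumes D: "real_distribution \<mu>"
    and ch: "\<And>u. char \<mu> u = complex_of_real (exp (- C * \<bar>u\<bar> powr \<alpha>))"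
    and hm: "h \<in> borel_measurable borel" and odd: "\<And>x. h (-x) = - h x"
  shows "(\<integral>x. h x \<partial>\<mu>) = 0"
proof -
  interpret mu: real_distribution \<mu> by fact
  have sets_mu[measurable_cong]: "sets \<mu> = sets borel" by simp
  have um: "(uminus :: real \<Rightarrow> real) \<in> measurable \<mu> borel" by measurable
  let ?\<nu> = "distr \<mu> borel uminus"
  have Dn: "real_distribution ?\<nu>" using um by (rule mu.real_distribution_distr)
  have "char ?\<nu> u = char \<mu> u" for u
  proof -
    have "char ?\<nu> u = (CLINT x|\<mu>. iexp (u * (- x)))"
      unfolding char_def using um by (subst integral_distr) auto
    also have "\<dots> = char \<mu> (-u)" unfolding char_def by simp
    also have "\<dots> = char \<mu> u" by (simp add: ch)
    finally show ?thesis .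
  qed
  then have "char ?\<nu> = char \<mu>" by auto
  then have eq: "?\<nu> = \<mu>" by (rule Levy_uniqueness[OF Dn D])
  have "(\<integral>x. h x \<partial>\<mu>) = (\<integral>x. h x \<partial>?\<nu>)" by (simp only: eq)
  also have "\<dots> = (\<integral>x. h (- x) \<partial>\<mu>)" using integral_distr[OF um hm] by simp
  also have "\<dots> = - (\<integral>x. h x \<partial>\<mu>)" by (simp add: odd)
  finally show ?thesis by simp
qed

lemma gfun_sq_le2:
  assumes d: "\<delta> > 0" and c: "c > 0"
  shows "(gfun \<delta> (x/c))\<^sup>2 \<le> \<delta>\<^sup>2 * min ((x/(c*\<delta>))\<^sup>2) 1"
proof -
  have e: "\<delta>\<^sup>2 * (x/(c*\<delta>))\<^sup>2 = (x/c)\<^sup>2" using d c by (simp add: power_divide power_mult_distrib)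
  have g: "(gfun \<delta> (x/c))\<^sup>2 \<le> min ((x/c)\<^sup>2) (\<delta>\<^sup>2)" by (rule gfun_sq_le[OF d])
  show ?thesis
  proof (cases "(x/(c*\<delta>))\<^sup>2 \<le> 1")
    case True then show ?thesis using g e by simp
  next
    case False then show ?thesis using g by simp
  qed
qed


theorem mainTheorem5:
  fixes M :: "'a measure" and Y :: "nat \<Rightarrow> 'a \<Rightarrow> real" and \<alpha> \<beta> \<delta> :: real
  assumes "prob_space M"
    and "\<And>i. Y i \<in> borel_measurable M"
    and "prob_space.indep_vars M (\<lambda>_. borel) Y UNIV"
    and "\<And>i. distr M borel (Y i) = distr M borel (Y 0)"
    and "sym_stable \<alpha> (distr M borel (Y 0))"
    and "0 < \<alpha>" and "\<alpha> \<le> 2"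
    and "0 < \<beta>" and "\<beta> < 1"
    and "0 < \<delta>"
  shows "\<exists>(Mt :: nat \<Rightarrow> real \<Rightarrow> 'a \<Rightarrow> real) (A :: nat \<Rightarrow> real \<Rightarrow> 'a \<Rightarrow> real)
            (Q :: nat \<Rightarrow> real \<Rightarrow> 'a \<Rightarrow> real).
    (\<forall>n\<ge>1.
       (AE \<omega> in M. \<forall>t\<ge>0. Xn_delta \<alpha> \<beta> \<delta> Y n t \<omega> = Mt n t \<omega> + A n t \<omega>) \<and>
       local_martingale M (nat_filtration M (Xn \<alpha> \<beta> Y n)) (Mt n) \<and>
       finite_variation_process M (nat_filtration M (Xn \<alpha> \<beta> Y n)) (A n) \<and>
       quadratic_variation M (Mt n) (Q n)) \<and>
    (\<forall>t\<ge>0. \<forall>\<theta>>0. \<exists>\<tau> :: nat \<Rightarrow> 'a \<Rightarrow> real.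
       (\<forall>n\<ge>1. stopping_time (nat_filtration M (Xn \<alpha> \<beta> Y n)) (\<tau> n) \<and>
              (\<forall>\<omega>\<in>space M. 0 \<le> \<tau> n \<omega>) \<and>
              measure M {\<omega> \<in> space M. \<tau> n \<omega> \<le> \<theta>} \<le> 1 / \<theta>) \<and>
       (SUP n\<in>{1..}. \<integral>\<^sup>+ \<omega>. (ennreal (Q n (min t (\<tau> n \<omega>)) \<omega>)
            + total_variation (\<lambda>s. A n s \<omega>) (min t (\<tau> n \<omega>))) \<partial>M) < \<infinity>)"
proof -
  interpret prob_space M by (rule assms(1))
  note Ym = assms(2)
  have dpos: "\<delta> > 0" by (rule assms(10))
  have alpos: "\<alpha> > 0" by (rule assms(6))
  let ?\<mu> = "distr M borel (Y 0)"
  have Dmu: "real_distribution ?\<mu>" using Ym[of 0] by simp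
  obtain C where C: "C > 0" and ch: "\<And>u. char ?\<mu> u = complex_of_real (exp (- C * \<bar>u\<bar> powr \<alpha>))"
    using assms(5) unfolding sym_stable_def by blast
  have mean_mu: "(\<integral>x. gfun \<delta> (x/c) \<partial>?\<mu>) = 0" for c
  proof (rule sym_zero[OF Dmu ch])
    show "(\<lambda>x. gfun \<delta> (x/c)) \<in> borel_measurable borel" by measurable
    show "gfun \<delta> (- x / c) = - gfun \<delta> (x / c)" for x
      using gfun_odd[OF dpos, of "x/c"] by simp
  qed
  have mean0: "(\<integral>\<omega>. gfun \<delta> (Y i \<omega> / c) \<partial>M) = 0" for i c
  proof -
    have gm: "(\<lambda>x. gfun \<delta> (x/c)) \<in> borel_measurable borel" by measurable
    have "(\<integral>x. gfun \<delta> (x/c) \<partial>distr M borel (Y i)) = (\<integral>\<omega>. gfun \<delta> (Y i \<omega> / c) \<partial>M)"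
      by (rule integral_distr[OF Ym gm])
    then show ?thesis using mean_mu[of c] assms(4)[of i] by simp
  qed
  have Kb: "(\<integral>\<^sup>+\<omega>. ennreal ((gfun \<delta> (Y i \<omega> / c))\<^sup>2) \<partial>M) \<le> ennreal (\<delta>\<^sup>2 * (10 * (C * (c*\<delta>) powr (-\<alpha>))))"
    if c: "c > 0" for i c
  proof -
    have gm: "(\<lambda>x. ennreal ((gfun \<delta> (x/c))\<^sup>2)) \<in> borel_measurable borel" by measurable
    have "(\<integral>\<^sup>+\<omega>. ennreal ((gfun \<delta> (Y i \<omega> / c))\<^sup>2) \<partial>M) = (\<integral>\<^sup>+x. ennreal ((gfun \<delta> (x/c))\<^sup>2) \<partial>distr M borel (Y i))"
      using nn_integral_distr[OF Ym, of "\<lambda>x. ennreal ((gfun \<delta> (x/c))\<^sup>2)"] gm by simp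
    also have "\<dots> = (\<integral>\<^sup>+x. ennreal ((gfun \<delta> (x/c))\<^sup>2) \<partial>?\<mu>)" using assms(4)[of i] by simp
    also have "\<dots> \<le> (\<integral>\<^sup>+x. ennreal (\<delta>\<^sup>2) * ennreal (min ((x/(c*\<delta>))\<^sup>2) 1) \<partial>?\<mu>)"
    proof (rule nn_integral_mono)
      fix x
      have "ennreal ((gfun \<delta> (x/c))\<^sup>2) \<le> ennreal (\<delta>\<^sup>2 * min ((x/(c*\<delta>))\<^sup>2) 1)"
        by (rule ennreal_leI[OF gfun_sq_le2[OF dpos c]])
      also have "\<dots> = ennreal (\<delta>\<^sup>2) * ennreal (min ((x/(c*\<delta>))\<^sup>2) 1)"
        by (rule ennreal_mult) auto
      finally show "ennreal ((gfun \<delta> (x/c))\<^sup>2) \<le> ennreal (\<delta>\<^sup>2) * ennreal (min ((x/(c*\<delta>))\<^sup>2) 1)" .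
    qed
    also have "\<dots> = ennreal (\<delta>\<^sup>2) * (\<integral>\<^sup>+x. ennreal (min ((x/(c*\<delta>))\<^sup>2) 1) \<partial>?\<mu>)"
      by (rule nn_integral_cmult) measurable
    also have "\<dots> \<le> ennreal (\<delta>\<^sup>2) * ennreal (10 * (C * (c*\<delta>) powr (-\<alpha>)))"
      by (intro mult_left_mono stable_moment[OF Dmu ch C alpos]) (use c dpos in auto)
    also have "\<dots> = ennreal (\<delta>\<^sup>2 * (10 * (C * (c*\<delta>) powr (-\<alpha>))))"
      by (rule ennreal_mult[symmetric]) (use C in auto)
    finally show ?thesis .
  qed
  define K0 where "K0 = \<delta>\<^sup>2 * (10 * (C * \<delta> powr (-\<alpha>)))"
  have K0: "K0 \<ge> 0" unfolding K0_def using C by simp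
  have per_n: "(AE \<omega> in M. \<forall>t\<ge>0. Xn_delta \<alpha> \<beta> \<delta> Y n t \<omega> = Sp Y (real n powr \<beta>) (real n powr (\<beta>/\<alpha>)) \<delta> t \<omega> + 0) \<and>
       local_martingale M (nat_filtration M (Xn \<alpha> \<beta> Y n)) (Sp Y (real n powr \<beta>) (real n powr (\<beta>/\<alpha>)) \<delta>) \<and>
       finite_variation_process M (nat_filtration M (Xn \<alpha> \<beta> Y n)) (\<lambda>t \<omega>. 0) \<and>
       quadratic_variation M (Sp Y (real n powr \<beta>) (real n powr (\<beta>/\<alpha>)) \<delta>) (Qp Y (real n powr \<beta>) (real n powr (\<beta>/\<alpha>)) \<delta>) \<and>
       stopping_time (nat_filtration M (Xn \<alpha> \<beta> Y n)) (\<lambda>\<omega>. x) \<and>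
       (\<forall>r\<ge>0. (\<integral>\<^sup>+\<omega>. ennreal (Qp Y (real n powr \<beta>) (real n powr (\<beta>/\<alpha>)) \<delta> r \<omega>) \<partial>M) \<le> ennreal (r * K0))"
    if n: "n \<ge> 1" for n x
  proof -
    define a where "a = real n powr \<beta>"
    define c where "c = real n powr (\<beta>/\<alpha>)"
    have npos: "real n > 0" using n by simp
    have apos: "a > 0" and cpos: "c > 0" unfolding a_def c_def using npos by auto
    interpret P: proc M Y a c \<delta>
      by (intro proc.intro proc_axioms.intro assms(1) Ym assms(3) apos cpos dpos mean0)
    have XnE: "Xn \<alpha> \<beta> Y n = (\<lambda>r \<omega>. (\<Sum>i\<in>{1..nat \<lfloor>a * r\<rfloor>}. Y i \<omega>) / c)"
      by (simp add: fun_eq_iff Xn_def a_def c_def)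
    have bound: "(\<integral>\<^sup>+\<omega>. ennreal (Qp Y a c \<delta> r \<omega>) \<partial>M) \<le> ennreal (r * K0)" if r: "r \<ge> 0" for r
    proof -
      define Kn where "Kn = \<delta>\<^sup>2 * (10 * (C * (c*\<delta>) powr (-\<alpha>)))"
      have Kn0: "Kn \<ge> 0" unfolding Kn_def using C by simp
      have "c powr (-\<alpha>) = real n powr (-\<beta>)"
        unfolding c_def using alpos by (simp add: powr_powr)
      then have "(c*\<delta>) powr (-\<alpha>) = real n powr (-\<beta>) * \<delta> powr (-\<alpha>)"
        using cpos dpos by (simp add: powr_mult)
      then have KnE: "Kn = K0 * real n powr (-\<beta>)" unfolding Kn_def K0_def by simp
      have an: "a * real n powr (-\<beta>) = 1" unfolding a_def using npos by (simp add: powr_add[symmetric])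
      have fl: "real (nat \<lfloor>a * r\<rfloor>) \<le> a * r" using apos r by simp
      have "real (nat \<lfloor>a * r\<rfloor>) * Kn \<le> (a * r) * Kn" using fl Kn0 by (rule mult_right_mono)
      also have "\<dots> = r * K0 * (a * real n powr (-\<beta>))" unfolding KnE by (simp add: algebra_simps)
      also have "\<dots> = r * K0" unfolding an by simp
      finally have le: "real (nat \<lfloor>a * r\<rfloor>) * Kn \<le> r * K0" .
      have "(\<integral>\<^sup>+\<omega>. ennreal (Qp Y a c \<delta> r \<omega>) \<partial>M) \<le> of_nat (nat \<lfloor>a * r\<rfloor>) * ennreal Kn"
        unfolding Kn_def by (rule P.Q_bound) (rule Kb[OF cpos])
      also have "of_nat (nat \<lfloor>a * r\<rfloor>) * ennreal Kn = ennreal (real (nat \<lfloor>a * r\<rfloor>) * Kn)"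
        using Kn0 by (simp add: ennreal_mult ennreal_of_nat_eq_real_of_nat)
      also have "\<dots> \<le> ennreal (r * K0)" using le by (rule ennreal_leI)
      finally show ?thesis .
    qed
    show ?thesis unfolding XnE a_def[symmetric] c_def[symmetric]
      using P.local_mart P.fv_zero P.qv P.const_stop bound
      by (simp add: Xn_delta_eq[OF n] a_def c_def)
  qed
  have part1: "\<forall>n\<ge>1. (AE \<omega> in M. \<forall>t\<ge>0. Xn_delta \<alpha> \<beta> \<delta> Y n t \<omega> = Sp Y (real n powr \<beta>) (real n powr (\<beta>/\<alpha>)) \<delta> t \<omega> + 0) \<and>
       local_martingale M (nat_filtration M (Xn \<alpha> \<beta> Y n)) (Sp Y (real n powr \<beta>) (real n powr (\<beta>/\<alpha>)) \<delta>) \<and>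
       finite_variation_process M (nat_filtration M (Xn \<alpha> \<beta> Y n)) (\<lambda>t \<omega>. 0) \<and>
       quadratic_variation M (Sp Y (real n powr \<beta>) (real n powr (\<beta>/\<alpha>)) \<delta>) (Qp Y (real n powr \<beta>) (real n powr (\<beta>/\<alpha>)) \<delta>)"
    using per_n by blast
  have part2: "\<forall>t\<ge>0. \<forall>\<theta>>0. \<exists>\<tau> :: nat \<Rightarrow> 'a \<Rightarrow> real.
       (\<forall>n\<ge>1. stopping_time (nat_filtration M (Xn \<alpha> \<beta> Y n)) (\<tau> n) \<and>
              (\<forall>\<omega>\<in>space M. 0 \<le> \<tau> n \<omega>) \<and>
              measure M {\<omega> \<in> space M. \<tau> n \<omega> \<le> \<theta>} \<le> 1 / \<theta>) \<and>
       (SUP n\<in>{1..}. \<integral>\<^sup>+ \<omega>. (ennreal (Qp Y (real n powr \<beta>) (real n powr (\<beta>/\<alpha>)) \<delta> (min t (\<tau> n \<omega>)) \<omega>)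
            + total_variation (\<lambda>s. 0) (min t (\<tau> n \<omega>))) \<partial>M) < \<infinity>"
  proof (intro allI impI)
    fix t \<theta> :: real assume t: "0 \<le> t" and th: "0 < \<theta>"
    define r where "r = min t (\<theta> + 1)"
    have r: "0 \<le> r" "r \<le> t" unfolding r_def using t th by auto
    show "\<exists>\<tau> :: nat \<Rightarrow> 'a \<Rightarrow> real.
       (\<forall>n\<ge>1. stopping_time (nat_filtration M (Xn \<alpha> \<beta> Y n)) (\<tau> n) \<and>
              (\<forall>\<omega>\<in>space M. 0 \<le> \<tau> n \<omega>) \<and>
              measure M {\<omega> \<in> space M. \<tau> n \<omega> \<le> \<theta>} \<le> 1 / \<theta>) \<and>
       (SUP n\<in>{1..}. \<integral>\<^sup>+ \<omega>. (ennreal (Qp Y (real n powr \<beta>) (real n powr (\<beta>/\<alpha>)) \<delta> (min t (\<tau> n \<omega>)) \<omega>)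
            + total_variation (\<lambda>s. 0) (min t (\<tau> n \<omega>))) \<partial>M) < \<infinity>"
    proof (intro exI[of _ "\<lambda>n \<omega>. \<theta> + 1"] conjI allI impI ballI)
      fix n :: nat assume "n \<ge> 1"
      from per_n[OF this, of "\<theta> + 1"] show "stopping_time (nat_filtration M (Xn \<alpha> \<beta> Y n)) (\<lambda>\<omega>. \<theta> + 1)" by blast
      show "0 \<le> \<theta> + 1" using th by simp
      have "{\<omega> \<in> space M. \<theta> + 1 \<le> \<theta>} = {}" by auto
      then show "measure M {\<omega> \<in> space M. \<theta> + 1 \<le> \<theta>} \<le> 1 / \<theta>" using th by simp
    next
      have "(SUP n\<in>{1..}. \<integral>\<^sup>+ \<omega>. (ennreal (Qp Y (real n powr \<beta>) (real n powr (\<beta>/\<alpha>)) \<delta> (min t (\<theta> + 1)) \<omega>)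
            + total_variation (\<lambda>s. 0) (min t (\<theta> + 1))) \<partial>M) \<le> ennreal (t * K0)"
      proof (rule SUP_least)
        fix n :: nat assume "n \<in> {1..}"
        then have n: "n \<ge> 1" by simp
        have "(\<integral>\<^sup>+ \<omega>. (ennreal (Qp Y (real n powr \<beta>) (real n powr (\<beta>/\<alpha>)) \<delta> (min t (\<theta> + 1)) \<omega>)
            + total_variation (\<lambda>s. 0) (min t (\<theta> + 1))) \<partial>M) =
            (\<integral>\<^sup>+ \<omega>. ennreal (Qp Y (real n powr \<beta>) (real n powr (\<beta>/\<alpha>)) \<delta> r \<omega>) \<partial>M)"
          unfolding r_def by (simp add: tv_zero)
        also have "\<dots> \<le> ennreal (r * K0)" using per_n[OF n, of 0] r by blast
        also have "\<dots> \<le> ennreal (t * K0)" using r K0 by (intro ennreal_leI mult_right_mono) auto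
        finally show "(\<integral>\<^sup>+ \<omega>. (ennreal (Qp Y (real n powr \<beta>) (real n powr (\<beta>/\<alpha>)) \<delta> (min t (\<theta> + 1)) \<omega>)
            + total_variation (\<lambda>s. 0) (min t (\<theta> + 1))) \<partial>M) \<le> ennreal (t * K0)" .
      qed
      also have "\<dots> < \<infinity>" by simp
      finally show "(SUP n\<in>{1..}. \<integral>\<^sup>+ \<omega>. (ennreal (Qp Y (real n powr \<beta>) (real n powr (\<beta>/\<alpha>)) \<delta> (min t (\<theta> + 1)) \<omega>)
            + total_variation (\<lambda>s. 0) (min t (\<theta> + 1))) \<partial>M) < \<infinity>" .
    qed
  qed
  show ?thesis
    by (rule exI[of _ "\<lambda>n. Sp Y (real n powr \<beta>) (real n powr (\<beta>/\<alpha>)) \<delta>"], rule exI[of _ "\<lambda>n t \<omega>. 0"],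
        rule exI[of _ "\<lambda>n. Qp Y (real n powr \<beta>) (real n powr (\<beta>/\<alpha>)) \<delta>"], rule conjI[OF part1 part2])
qed


end
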